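(* Let $U\le B$ be positive integers, $P>0$, $\mathbf{H}\in\mathbb{C}^{U\times B}$, and $\mathbf{s}\in\mathbb{C}^U$ with $\mathbf{s}\neq\mathbf{0}$. Set $$\mathbf{Q}=\mathbf{I}_U-\frac{\mathbf{s}\mathbf{s}^H}{\|\mathbf{s}\|_2^2},\qquad \mathbf{A}=\mathbf{Q}\mathbf{H}\in\mathbb{C}^{U\times B},$$ let $\ell=\sqrt{P/(2B)}$ and $$\mathcal{B}^B=\{\mathbf{c}\in\mathbb{C}^B:\ |\mathrm{Re}\{c_b\}|\le \ell,\ |\mathrm{Im}\{c_b\}|\le \ell,\ b=1,\dots,B\}.$$ Let $\delta>0$ and a step size $\tau>0$ satisfy $\tau<\|\mathbf{A}^H\mathbf{A}\|_{2,2}^{-1}$ and $\tau\delta<1$. Consider the objective $$F(\mathbf{x})=\tfrac12\|\mathbf{A}\mathbf{x}\|_2^2-\tfrac{\delta}{2}\|\mathbf{x}\|_2^2+\chi(\mathbf{x}\in\mathcal{B}^B),$$ i.e. the problem $\min_{\mathbf{x}\in\mathcal{B}^B}\tfrac12\|\mathbf{A}\mathbf{x}\|_2^2-\tfrac{\delta}{2}\|\mathbf{x}\|_2^2$. Define the sequence (algorithm C2PO) by $\mathbf{x}^{(1)}=\mathbf{H}^H\mathbf{s}$ and, for $t=1,2,\dots$, $$\mathbf{z}^{(t+1)}=\mathbf{x}^{(t)}-\tau\mathbf{A}^H\mathbf{A}\mathbf{x}^{(t)},\qquad \mathbf{x}^{(t+1)}=\mathrm{prox}_g(\mathbf{z}^{(t+1)};\tau),$$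 where $\mathrm{prox}_g$ acts entrywise as $$\mathrm{prox}_g(z)=\mathrm{sgn}(\mathrm{Re}\{z\})\min\Big\{\tfrac{1}{1-\tau\delta}|\mathrm{Re}\{z\}|,\ \ell\Big\}+j\,\mathrm{sgn}(\mathrm{Im}\{z\})\min\Big\{\tfrac{1}{1-\tau\delta}|\mathrm{Im}\{z\}|,\ \ell\Big\}.$$ Then C2PO decreases the objective monotonically, i.e. $F(\mathbf{x}^{(t+1)})\le F(\mathbf{x}^{(t)})$ for all $t$, and any limit point of the iterates $\{\mathbf{x}^{(t)}\}$ is a stationary point of this problem.
   Context: $\chi(\mathbf{x}\in\mathcal{B}^B)$ equals $0$ if $\mathbf{x}\in\mathcal{B}^B$ and $+\infty$ otherwise. $\|\cdot\|_{2,2}$ is the spectral (matrix $\ell_2$) norm. $\mathrm{sgn}(a)=+1$ for $a\ge0$ and $-1$ for $a<0$; $j$ is the imaginary unit. Complex vectors are identified with real vectors of twice the dimension, with real inner product $\mathrm{Re}\{\mathbf{u}^H\mathbf{v}\}$. Writing $f(\mathbf{x})=\tfrac12\|\mathbf{A}\mathbf{x}\|_2^2$ and $g(\mathbf{x})=\chi(\mathbf{x}\in\mathcal{B}^B)-\tfrac{\delta}{2}\|\mathbf{x}\|_2^2$, a stationary point is a point $\mathbf{x}^\star\in\mathcal{B}^B$ with $0\in\partial g(\mathbf{x}^\star)+\nabla f(\mathbf{x}^\star)$, equivalently $-(\mathbf{A}^H\mathbf{A}\mathbf{x}^\star-\delta\mathbf{x}^\star)$ lies in the normal cone of $\mathcal{B}^B$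 at $\mathbf{x}^\star$. *)

theory Defs
  imports "HOL-Analysis.Analysis"
begin

definition cadj :: "complex ^ 'n ^ 'm \<Rightarrow> complex ^ 'm ^ 'n" where
  "cadj M = (\<chi> i j. cnj (M $ j $ i))"

definition cinner :: "complex ^ 'n \<Rightarrow> complex ^ 'n \<Rightarrow> real" where
  "cinner u v = Re (\<Sum>i\<in>UNIV. cnj (u $ i) * v $ i)"

definition projQ :: "complex ^ 'u \<Rightarrow> complex ^ 'u ^ 'u" where
  "projQ s = mat 1 - (\<chi> i j. s $ i * cnj (s $ j) / complex_of_real ((norm s)\<^sup>2))"

definition cbox_set :: "real \<Rightarrow> (complex ^ 'b) set" where
  "cbox_set l = {c. \<forall>b. \<bar>Re (c $ b)\<bar> \<le> l \<and> \<bar>Im (c $ b)\<bar> \<le> l}"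

definition sgnp :: "real \<Rightarrow> real" where
  "sgnp a = (if a \<ge> 0 then 1 else -1)"

definition prox_scalar :: "real \<Rightarrow> real \<Rightarrow> real \<Rightarrow> complex \<Rightarrow> complex" where
  "prox_scalar tau delta l z =
     Complex (sgnp (Re z) * min (\<bar>Re z\<bar> / (1 - tau * delta)) l)
             (sgnp (Im z) * min (\<bar>Im z\<bar> / (1 - tau * delta)) l)"

definition prox_g :: "real \<Rightarrow> real \<Rightarrow> real \<Rightarrow> complex ^ 'b \<Rightarrow> complex ^ 'b" where
  "prox_g tau delta l z = (\<chi> b. prox_scalar tau delta l (z $ b))"

definition objF :: "complex ^ 'b ^ 'u \<Rightarrow> real \<Rightarrow> real \<Rightarrow> complex ^ 'b \<Rightarrow> ereal" where
  "objF A delta l x = (if x \<in> cbox_set l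
      then ereal ((norm (A *v x))\<^sup>2 / 2 - delta / 2 * (norm x)\<^sup>2) else \<infinity>)"

text \<open>Stationary point: x in the box and -(A^H A x - delta x) lies in the normal cone of the box at x.\<close>
definition stationary :: "complex ^ 'b ^ 'u \<Rightarrow> real \<Rightarrow> real \<Rightarrow> complex ^ 'b \<Rightarrow> bool" where
  "stationary A delta l x \<longleftrightarrow> x \<in> cbox_set l \<and>
     (\<forall>y\<in>cbox_set l. cinner (- ((cadj A ** A) *v x - delta *\<^sub>R x)) (y - x) \<le> 0)"

end

theory Submission
  imports Defs
begin

lemma cinner_eq: "cinner u v = u \<bullet> v"
  unfolding cinner_def inner_vec_def inner_complex_def
  by (simp add: Re_sum)

lemma adj_inner: "(A *v u) \<bullet> w = u \<bullet> (cadj A *v w)"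
proof -
  have "(\<Sum>i\<in>UNIV. cnj ((A *v u) $ i) * w $ i) = (\<Sum>i\<in>UNIV. \<Sum>j\<in>UNIV. cnj (A$i$j) * cnj (u$j) * w$i)"
    unfolding matrix_vector_mult_def by (simp add: sum_distrib_right)
  also have "\<dots> = (\<Sum>j\<in>UNIV. \<Sum>i\<in>UNIV. cnj (A$i$j) * cnj (u$j) * w$i)"
    by (rule sum.swap)
  also have "\<dots> = (\<Sum>j\<in>UNIV. cnj (u $ j) * (cadj A *v w) $ j)"
    unfolding matrix_vector_mult_def cadj_def by (simp add: sum_distrib_left mult_ac)
  finally show ?thesis unfolding cinner_eq[symmetric] cinner_def by simp
qed

lemma norm_sq_vec: "(norm (x::complex^'n))\<^sup>2 = (\<Sum>b\<in>UNIV. (Re (x$b))\<^sup>2 + (Im (x$b))\<^sup>2)"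
  unfolding power2_norm_eq_inner by (simp add: inner_vec_def inner_complex_def power2_eq_square)

lemma inner_vec_c: "(x::complex^'n) \<bullet> y = (\<Sum>b\<in>UNIV. Re (x$b) * Re (y$b) + Im (x$b) * Im (y$b))"
  by (simp add: inner_vec_def inner_complex_def)

lemma scalar_prox:
  fixes a u k l :: real
  assumes "0 < k" "k \<le> 1" "\<bar>u\<bar> \<le> l"
  defines "p \<equiv> sgnp a * min (\<bar>a\<bar> / k) l"
  shows "k * p\<^sup>2 - 2 * p * a \<le> k * u\<^sup>2 - 2 * u * a" and "\<bar>p\<bar> \<le> l"
proof -
  have l0: "l \<ge> 0" using assms by linarith
  have "k * (p - a/k)\<^sup>2 \<le> k * (u - a/k)\<^sup>2"
  proof -
    have "(p - a/k)\<^sup>2 \<le> (u - a/k)\<^sup>2"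
    proof (cases "\<bar>a\<bar>/k \<le> l")
      case True
      then have "p = a/k" using assms(1) unfolding p_def sgnp_def
        by (auto simp: min_def abs_if divide_simps)
      then show ?thesis by simp
    next
      case False
      show ?thesis
      proof (cases "a \<ge> 0")
        case True
        then have "p = l" "a/k > l" using False unfolding p_def sgnp_def by (auto simp: min_def)
        then have "\<bar>p - a/k\<bar> \<le> \<bar>u - a/k\<bar>" using assms(3) by auto
        then show ?thesis by (simp add: abs_le_square_iff)
      next
        case f2: False
        then have "p = -l" "a/k < -l" using False assms(1) unfolding p_def sgnp_def
          by (auto simp: min_def divide_simps abs_if split: if_splits)
        then have "\<bar>p - a/k\<bar> \<le> \<bar>u - a/k\<bar>" using assms(3) by auto
        then show ?thesis by (simp add: abs_le_square_iff)
      qed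
    qed
    then show ?thesis using assms(1) by simp
  qed
  moreover have "k*(p - a/k)\<^sup>2 = k*p\<^sup>2 - 2*p*a + a\<^sup>2/k"
    using assms(1) by (simp add: power2_eq_square field_simps)
  moreover have "k*(u - a/k)\<^sup>2 = k*u\<^sup>2 - 2*u*a + a\<^sup>2/k"
    using assms(1) by (simp add: power2_eq_square field_simps)
  ultimately show "k * p\<^sup>2 - 2 * p * a \<le> k * u\<^sup>2 - 2 * u * a" by linarith
  have m0: "0 \<le> min (\<bar>a\<bar> / k) l" using l0 assms(1) by simp
  have "\<bar>sgnp a\<bar> = 1" unfolding sgnp_def by simp
  then have "\<bar>p\<bar> = min (\<bar>a\<bar> / k) l" unfolding p_def abs_mult using m0 by simp
  then show "\<bar>p\<bar> \<le> l" by simp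
qed

lemma prox_min:
  fixes z y :: "complex ^ 'b"
  assumes "0 < 1 - tau*delta" "0 \<le> tau*delta" "y \<in> cbox_set l"
  defines "q \<equiv> prox_g tau delta l z"
  shows "(1 - tau*delta) * (norm q)\<^sup>2 - 2 * (q \<bullet> z) \<le> (1 - tau*delta) * (norm y)\<^sup>2 - 2 * (y \<bullet> z)"
    and "q \<in> cbox_set l"
proof -
  let ?k = "1 - tau*delta"
  have y: "\<bar>Re (y$b)\<bar> \<le> l" "\<bar>Im (y$b)\<bar> \<le> l" for b using assms(3) unfolding cbox_set_def by auto
  have qR: "Re (q$b) = sgnp (Re (z$b)) * min (\<bar>Re (z$b)\<bar> / ?k) l" for b
    unfolding q_def prox_g_def prox_scalar_def by simp
  have qI: "Im (q$b) = sgnp (Im (z$b)) * min (\<bar>Im (z$b)\<bar> / ?k) l" for b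
    unfolding q_def prox_g_def prox_scalar_def by simp
  have kk: "?k \<le> 1" using assms(2) by linarith
  have trm: "?k * ((Re (q$b))\<^sup>2 + (Im (q$b))\<^sup>2) - 2 * (Re (q$b) * Re (z$b) + Im (q$b) * Im (z$b))
     \<le> ?k * ((Re (y$b))\<^sup>2 + (Im (y$b))\<^sup>2) - 2 * (Re (y$b) * Re (z$b) + Im (y$b) * Im (z$b))" for b
    using scalar_prox(1)[OF assms(1) kk y(1)[of b], of "Re (z$b)"]
          scalar_prox(1)[OF assms(1) kk y(2)[of b], of "Im (z$b)"]
    unfolding qR qI by (simp add: algebra_simps)
  have "?k * (norm q)\<^sup>2 - 2 * (q \<bullet> z) = (\<Sum>b\<in>UNIV. ?k * ((Re (q$b))\<^sup>2 + (Im (q$b))\<^sup>2) - 2 * (Re (q$b) * Re (z$b) + Im (q$b) * Im (z$b)))"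
    unfolding norm_sq_vec inner_vec_c by (simp add: sum_distrib_left sum_subtractf)
  also have "\<dots> \<le> (\<Sum>b\<in>UNIV. ?k * ((Re (y$b))\<^sup>2 + (Im (y$b))\<^sup>2) - 2 * (Re (y$b) * Re (z$b) + Im (y$b) * Im (z$b)))"
    by (rule sum_mono) (rule trm)
  also have "\<dots> = ?k * (norm y)\<^sup>2 - 2 * (y \<bullet> z)"
    unfolding norm_sq_vec inner_vec_c by (simp add: sum_distrib_left sum_subtractf)
  finally show "?k * (norm q)\<^sup>2 - 2 * (q \<bullet> z) \<le> ?k * (norm y)\<^sup>2 - 2 * (y \<bullet> z)" .
  show "q \<in> cbox_set l"
    unfolding cbox_set_def mem_Collect_eq
  proof (intro allI conjI)
    fix b
    show "\<bar>Re (q$b)\<bar> \<le> l" unfolding qR by (rule scalar_prox(2)[OF assms(1) kk y(1)])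
    show "\<bar>Im (q$b)\<bar> \<le> l" unfolding qI by (rule scalar_prox(2)[OF assms(1) kk y(2)])
  qed
qed

lemma smult_real: "(complex_of_real t *s (v::complex^'n)) = t *\<^sub>R v"
  unfolding vec_eq_iff vector_scaleR_component vector_smult_component by (simp add: scaleR_conv_of_real)

lemma norm_add_sq: "(norm (a + b :: 'a::real_inner))\<^sup>2 = (norm a)\<^sup>2 + 2 * (a \<bullet> b) + (norm b)\<^sup>2"
  unfolding power2_norm_eq_inner by (simp add: inner_add inner_commute)

lemma quad_expand:
  fixes A :: "complex ^ 'b ^ 'u"
  shows "(norm (A *v (x + d)))\<^sup>2 = (norm (A *v x))\<^sup>2 + 2 * (d \<bullet> ((cadj A ** A) *v x)) + d \<bullet> ((cadj A ** A) *v d)"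
proof -
  have "(A *v x) \<bullet> (A *v d) = d \<bullet> ((cadj A ** A) *v x)"
    by (simp add: inner_commute adj_inner matrix_vector_mul_assoc[symmetric])
  moreover have "(norm (A *v d))\<^sup>2 = d \<bullet> ((cadj A ** A) *v d)"
    by (simp add: power2_norm_eq_inner adj_inner matrix_vector_mul_assoc[symmetric])
  ultimately show ?thesis by (simp add: matrix_vector_right_distrib norm_add_sq)
qed

lemma quad_bound:
  fixes M :: "complex ^ 'b ^ 'b"
  shows "d \<bullet> (M *v d) \<le> onorm (\<lambda>v. M *v v) * (norm d)\<^sup>2"
proof -
  have "d \<bullet> (M *v d) \<le> norm d * norm (M *v d)" by (rule norm_cauchy_schwarz)
  also have "\<dots> \<le> norm d * (onorm (\<lambda>v. M *v v) * norm d)"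
    by (rule mult_left_mono[OF onorm]) (auto intro: matrix_vector_mul_bounded_linear)
  finally show ?thesis by (simp add: power2_eq_square mult_ac)
qed

lemma small_param:
  fixes a b :: real
  assumes "\<forall>s. 0 < s \<and> s \<le> 1 \<longrightarrow> 0 \<le> a + s * b" "0 \<le> b"
  shows "0 \<le> a"
proof (rule ccontr)
  assume "\<not> 0 \<le> a"
  then have a: "a < 0" by simp
  define s where "s = min 1 (-a / (2 * (b + 1)))"
  have s0: "0 < s" "s \<le> 1" using a assms(2) unfolding s_def by (auto simp: divide_simps)
  have "s * b \<le> (-a / (2 * (b + 1))) * b"
    by (rule mult_right_mono) (auto simp: s_def assms(2))
  also have "\<dots> \<le> -a/2"
  proof -
    have "(-a / (2 * (b + 1))) * b = (-a/2) * (b/(b+1))" using assms(2) by (simp add: field_simps)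
    also have "\<dots> \<le> (-a/2) * 1"
      by (rule mult_left_mono) (use a assms(2) in \<open>auto simp: divide_simps\<close>)
    finally show ?thesis by simp
  qed
  finally have "a + s * b < 0" using a by linarith
  with assms(1) s0 show False by auto
qed

lemma arith_core:
  fixes tau delta L ax aq X Q D dx dM dMd qz xz :: real
  assumes "tau > 0" "aq = ax + 2*dM + dMd" "dMd \<le> L*D" "Q = X + 2*dx + D"
    "(1-tau*delta)*Q - 2*qz \<le> (1-tau*delta)*X - 2*xz" "qz = xz + dx - tau*dM"
  shows "aq/2 - delta/2*Q \<le> ax/2 - delta/2*X - (1-tau*L)/(2*tau)*D"
proof -
  have e1: "(1-tau*delta)*Q - 2*qz - ((1-tau*delta)*X - 2*xz) = -2*tau*delta*dx + (1-tau*delta)*D + 2*tau*dM"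
    using assms(4,6) by (simp add: algebra_simps)
  have e0: "tau*(2*(dM - delta*dx)) = -2*tau*delta*dx + 2*tau*dM" by (simp add: algebra_simps)
  have e5: "(1-tau*delta)*D = D - tau*delta*D" by (simp add: algebra_simps)
  have h0: "tau*(2*(dM - delta*dx)) \<le> -(1-tau*delta)*D"
    using e0 e1 e5 assms(5) by linarith
  have h: "2*(dM - delta*dx) \<le> (-(1-tau*delta)*D)/tau"
    using h0 assms(1) by (simp add: pos_le_divide_eq mult.commute)
  define H where "H = (-(1-tau*delta)*D)/tau"
  define K where "K = (1-tau*L)/tau*D"
  have e2: "H + L*D - delta*D = -K"
    unfolding H_def K_def using assms(1) by (simp add: field_simps)
  have e4: "(1-tau*L)/(2*tau)*D = K/2" unfolding K_def by simp
  have e6: "delta*Q = delta*X + 2*(delta*dx) + delta*D" using assms(4) by (simp add: algebra_simps)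
  have h': "2*(dM - delta*dx) \<le> H" using h unfolding H_def .
  have e7: "delta/2*Q = (delta*Q)/2" "delta/2*X = (delta*X)/2" by simp_all
  show ?thesis unfolding e4 e7 using h' e2 e6 assms(2,3) by (simp add: field_simps)
qed

lemma descent:
  fixes A :: "complex^'b^'u" and x :: "complex^'b"
  assumes "tau > 0" "0 < 1 - tau*delta" "0 \<le> tau*delta"
    "x \<in> cbox_set l"
  shows "(norm (A *v prox_g tau delta l (x - complex_of_real tau *s ((cadj A ** A) *v x))))\<^sup>2 / 2
      - delta/2*(norm (prox_g tau delta l (x - complex_of_real tau *s ((cadj A ** A) *v x))))\<^sup>2
    \<le> (norm (A *v x))\<^sup>2/2 - delta/2*(norm x)\<^sup>2
      - (1 - tau * onorm (\<lambda>v. (cadj A ** A) *v v))/(2*tau)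
        * (norm (prox_g tau delta l (x - complex_of_real tau *s ((cadj A ** A) *v x)) - x))\<^sup>2"
proof -
  define M where "M = cadj A ** A"
  define L where "L = onorm (\<lambda>v. M *v v)"
  define z where "z = x - tau *\<^sub>R (M *v x)"
  define q where "q = prox_g tau delta l z"
  define d where "d = q - x"
  have zz: "x - complex_of_real tau *s ((cadj A ** A) *v x) = z" unfolding z_def M_def smult_real ..
  have P: "(1 - tau*delta) * (norm q)\<^sup>2 - 2 * (q \<bullet> z) \<le> (1 - tau*delta) * (norm x)\<^sup>2 - 2 * (x \<bullet> z)"
    unfolding q_def by (rule prox_min(1)[OF assms(2,3,4)])
  have qd: "q = x + d" unfolding d_def by simp
  have nq: "(norm q)\<^sup>2 = (norm x)\<^sup>2 + 2 * (d \<bullet> x) + (norm d)\<^sup>2"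
    unfolding qd norm_add_sq by (simp add: inner_commute)
  have iz: "q \<bullet> z = x \<bullet> z + d \<bullet> x - tau * (d \<bullet> (M *v x))"
    unfolding qd z_def by (simp add: inner_add_left inner_diff_right algebra_simps)
  have Aq: "(norm (A *v q))\<^sup>2 = (norm (A *v x))\<^sup>2 + 2 * (d \<bullet> (M *v x)) + d \<bullet> (M *v d)"
    unfolding qd M_def by (rule quad_expand)
  have B: "d \<bullet> (M *v d) \<le> L * (norm d)\<^sup>2" unfolding L_def by (rule quad_bound)
  have "(norm (A *v q))\<^sup>2 / 2 - delta/2*(norm q)\<^sup>2 \<le> (norm (A *v x))\<^sup>2/2 - delta/2*(norm x)\<^sup>2 - (1 - tau*L)/(2*tau) * (norm d)\<^sup>2"
    by (rule arith_core[OF assms(1) Aq B nq P iz])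
  then show ?thesis unfolding zz q_def[symmetric] d_def[symmetric] L_def M_def .
qed

lemma conv_abs:
  fixes u w s l :: real
  assumes "\<bar>u\<bar> \<le> l" "\<bar>w\<bar> \<le> l" "0 \<le> s" "s \<le> 1"
  shows "\<bar>(1-s)*u + s*w\<bar> \<le> l"
proof -
  have "(1-s)*u + s*w \<le> l" by (rule convex_bound_le) (use assms in auto)
  moreover have "(1-s)*(-u) + s*(-w) \<le> l" by (rule convex_bound_le) (use assms in auto)
  ultimately show ?thesis by (simp add: algebra_simps)
qed

lemma box_convex:
  assumes "x \<in> cbox_set l" "y \<in> cbox_set l" "0 \<le> s" "s \<le> 1"
  shows "x + s *\<^sub>R (y - x) \<in> cbox_set l"
  unfolding cbox_set_def mem_Collect_eq
proof (intro allI conjI)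
  fix b
  have x: "\<bar>Re (x$b)\<bar> \<le> l" "\<bar>Im (x$b)\<bar> \<le> l" and y: "\<bar>Re (y$b)\<bar> \<le> l" "\<bar>Im (y$b)\<bar> \<le> l"
    using assms(1,2) unfolding cbox_set_def by auto
  have r: "Re ((x + s *\<^sub>R (y - x))$b) = (1-s)*Re (x$b) + s*Re (y$b)" by (simp add: algebra_simps)
  have i: "Im ((x + s *\<^sub>R (y - x))$b) = (1-s)*Im (x$b) + s*Im (y$b)" by (simp add: algebra_simps)
  show "\<bar>Re ((x + s *\<^sub>R (y - x))$b)\<bar> \<le> l" unfolding r by (rule conv_abs[OF x(1) y(1) assms(3,4)])
  show "\<bar>Im ((x + s *\<^sub>R (y - x))$b)\<bar> \<le> l" unfolding i by (rule conv_abs[OF x(2) y(2) assms(3,4)])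
qed

lemma box_closed: "closed (cbox_set l :: (complex^'b) set)"
proof -
  have eq: "cbox_set l = (\<Inter>b. {c::complex^'b. \<bar>Re (c$b)\<bar> \<le> l} \<inter> {c. \<bar>Im (c$b)\<bar> \<le> l})"
    unfolding cbox_set_def by auto
  have c1: "closed {c::complex^'b. \<bar>Re (c$b)\<bar> \<le> l}" for b
    by (rule closed_Collect_le) (intro continuous_intros)+
  have c2: "closed {c::complex^'b. \<bar>Im (c$b)\<bar> \<le> l}" for b
    by (rule closed_Collect_le) (intro continuous_intros)+
  show ?thesis unfolding eq by (rule closed_INT, rule ballI, rule closed_Int[OF c1 c2])
qed

lemma box_norm_bound:
  assumes "v \<in> cbox_set l"
  shows "(norm (v::complex^'b))\<^sup>2 \<le> real CARD('b) * (2 * l\<^sup>2)"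
proof -
  have t: "(Re (v$b))\<^sup>2 + (Im (v$b))\<^sup>2 \<le> 2 * l\<^sup>2" for b
  proof -
    have a: "\<bar>Re (v$b)\<bar> \<le> l" "\<bar>Im (v$b)\<bar> \<le> l" using assms unfolding cbox_set_def by auto
    then have "\<bar>Re (v$b)\<bar> \<le> \<bar>l\<bar>" "\<bar>Im (v$b)\<bar> \<le> \<bar>l\<bar>" by auto
    then have "(Re (v$b))\<^sup>2 \<le> l\<^sup>2" "(Im (v$b))\<^sup>2 \<le> l\<^sup>2" by (simp_all add: abs_le_square_iff)
    then show ?thesis by linarith
  qed
  show ?thesis unfolding norm_sq_vec
    using sum_bounded_above[of UNIV "\<lambda>b. (Re (v$b))\<^sup>2 + (Im (v$b))\<^sup>2" "2*l\<^sup>2"] t by simp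
qed

theorem theorem2:
  fixes H :: "complex ^ 'b ^ 'u" and s :: "complex ^ 'u"
    and P delta tau :: real and x :: "nat \<Rightarrow> complex ^ 'b"
  assumes "CARD('u) \<le> CARD('b)"
    and "P > 0" and "s \<noteq> 0"
    and "delta > 0" and "tau > 0"
    and "tau * onorm (\<lambda>v. (cadj (projQ s ** H) ** (projQ s ** H)) *v v) < 1"
    and "tau * delta < 1"
    and "x 1 = cadj H *v s"
    and "\<forall>t\<ge>1. x (Suc t) = prox_g tau delta (sqrt (P / (2 * real CARD('b))))
           (x t - complex_of_real tau *s ((cadj (projQ s ** H) ** (projQ s ** H)) *v x t))"
  shows "(\<forall>t\<ge>1. objF (projQ s ** H) delta (sqrt (P / (2 * real CARD('b)))) (x (Suc t))
                 \<le> objF (projQ s ** H) delta (sqrt (P / (2 * real CARD('b)))) (x t))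
       \<and> (\<forall>xs r. strict_mono r \<and> (x \<circ> r) \<longlonglongrightarrow> xs \<longrightarrow>
            stationary (projQ s ** H) delta (sqrt (P / (2 * real CARD('b)))) xs)"
proof -
  define A where "A = projQ s ** H"
  define M where "M = cadj A ** A"
  define l where "l = sqrt (P / (2 * real CARD('b)))"
  define L where "L = onorm (\<lambda>v. M *v v)"
  define T where "T = (\<lambda>v. prox_g tau delta l (v - complex_of_real tau *s (M *v v)))"
  define phi where "phi = (\<lambda>v. (norm (A *v v))\<^sup>2/2 - delta/2*(norm v)\<^sup>2)"
  define c where "c = (1 - tau*L)/(2*tau)"
  have rec: "x (Suc t) = T (x t)" if "t \<ge> 1" for t
    using assms(9) that unfolding T_def M_def A_def l_def by auto
  have tl: "tau*L < 1" using assms(6) unfolding L_def M_def A_def .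
  have k0: "0 < 1 - tau*delta" using assms(7) by simp
  have td0: "0 \<le> tau*delta" using assms(4,5) by simp
  have c0: "c > 0" unfolding c_def using tl assms(5) by simp
  have l0: "0 \<le> l" unfolding l_def using assms(2) by simp
  have zb: "0 \<in> cbox_set l" unfolding cbox_set_def using l0 by simp
  have inbox: "T v \<in> cbox_set l" for v
    unfolding T_def by (rule prox_min(2)[OF k0 td0 zb])
  have desc: "phi (T v) \<le> phi v - c * (norm (T v - v))\<^sup>2" if "v \<in> cbox_set l" for v
    using descent[OF assms(5) k0 td0 that, of A] unfolding phi_def T_def c_def L_def M_def .
  have objeq: "objF A delta l v = (if v \<in> cbox_set l then ereal (phi v) else \<infinity>)" for v
    unfolding objF_def phi_def by simp
  have part1: "objF A delta l (x (Suc t)) \<le> objF A delta l (x t)" if "t \<ge> 1" for t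
  proof (cases "x t \<in> cbox_set l")
    case True
    have "phi (x (Suc t)) \<le> phi (x t)"
      using desc[OF True] c0 unfolding rec[OF that] by (smt (verit) mult_nonneg_nonneg zero_le_power2)
    then show ?thesis unfolding objeq using True inbox rec[OF that] by simp
  next
    case False
    then show ?thesis unfolding objeq by simp
  qed
  have xb: "x t \<in> cbox_set l" if "t \<ge> 2" for t
  proof -
    have "x t = x (Suc (t - 1))" using that by simp
    also have "\<dots> = T (x (t - 1))" using that by (intro rec) simp
    finally show ?thesis using inbox by simp
  qed
  have part2: "stationary A delta l xs" if r: "strict_mono r" and lim: "(x \<circ> r) \<longlonglongrightarrow> xs" for xs r
  proof -
    define psi where "psi = (\<lambda>n. phi (x (n + 2)))"
    have lowb: "- delta/2 * (real CARD('b) * (2 * l\<^sup>2)) \<le> psi n" for n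
    proof -
      have "(norm (x (n+2)))\<^sup>2 \<le> real CARD('b) * (2 * l\<^sup>2)" by (rule box_norm_bound[OF xb]) simp
      then have "delta/2 * (norm (x (n+2)))\<^sup>2 \<le> delta/2 * (real CARD('b) * (2 * l\<^sup>2))"
        using assms(4) by (intro mult_left_mono) auto
      moreover have "0 \<le> (norm (A *v x (n+2)))\<^sup>2/2" by simp
      ultimately show ?thesis unfolding psi_def phi_def by linarith
    qed
    have step: "psi (Suc n) \<le> psi n - c * (norm (x (Suc (n+2)) - x (n+2)))\<^sup>2" for n
    proof -
      have "x (Suc n + 2) = T (x (n+2))" using rec[of "n+2"] by simp
      then show ?thesis unfolding psi_def using desc[OF xb[of "n+2"]] by simp
    qed
    have dec: "decseq psi"
      by (rule decseq_SucI) (use step c0 in \<open>smt (verit) mult_nonneg_nonneg zero_le_power2\<close>)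
    obtain Lm where psil: "psi \<longlonglongrightarrow> Lm" using decseq_convergent[OF dec] lowb by blast
    have "(\<lambda>n. (psi n - psi (Suc n)) / c) \<longlonglongrightarrow> (Lm - Lm) / c"
      by (intro tendsto_intros psil LIMSEQ_Suc) (use c0 in auto)
    then have t0: "(\<lambda>n. (psi n - psi (Suc n)) / c) \<longlonglongrightarrow> 0" by simp
    have "(\<lambda>n. (norm (x (Suc (n+2)) - x (n+2)))\<^sup>2) \<longlonglongrightarrow> 0"
    proof (rule tendsto_sandwich[OF _ _ tendsto_const t0])
      show "\<forall>\<^sub>F n in sequentially. 0 \<le> (norm (x (Suc (n+2)) - x (n+2)))\<^sup>2" by simp
      show "\<forall>\<^sub>F n in sequentially. (norm (x (Suc (n+2)) - x (n+2)))\<^sup>2 \<le> (psi n - psi (Suc n)) / c"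
      proof (rule always_eventually, rule allI)
        fix n
        have "c * (norm (x (Suc (n+2)) - x (n+2)))\<^sup>2 \<le> psi n - psi (Suc n)" using step[of n] by linarith
        then show "(norm (x (Suc (n+2)) - x (n+2)))\<^sup>2 \<le> (psi n - psi (Suc n)) / c"
          using c0 by (simp add: pos_le_divide_eq mult.commute)
      qed
    qed
    then have "(\<lambda>n. sqrt ((norm (x (Suc (n+2)) - x (n+2)))\<^sup>2)) \<longlonglongrightarrow> sqrt 0"
      by (rule tendsto_real_sqrt)
    then have "(\<lambda>n. norm (x (Suc (n+2)) - x (n+2))) \<longlonglongrightarrow> 0" by simp
    then have "(\<lambda>n. x (Suc (n+2)) - x (n+2)) \<longlonglongrightarrow> 0" by (simp add: tendsto_norm_zero_iff)
    then have e0: "(\<lambda>n. x (Suc n) - x n) \<longlonglongrightarrow> 0" by (rule LIMSEQ_offset)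
    have er: "(\<lambda>n. x (Suc (r n)) - x (r n)) \<longlonglongrightarrow> 0"
      using LIMSEQ_subseq_LIMSEQ[OF e0 r] by (simp add: comp_def)
    have xr: "(\<lambda>n. x (r n)) \<longlonglongrightarrow> xs" using lim by (simp add: comp_def)
    have "(\<lambda>n. x (r n) + (x (Suc (r n)) - x (r n))) \<longlonglongrightarrow> xs + 0"
      by (rule tendsto_add[OF xr er])
    then have qn: "(\<lambda>n. x (Suc (r n))) \<longlonglongrightarrow> xs" by simp
    define zs where "zs = xs - tau *\<^sub>R (M *v xs)"
    have zn: "(\<lambda>n. x (r n) - tau *\<^sub>R (M *v x (r n))) \<longlonglongrightarrow> zs"
      unfolding zs_def
      by (intro tendsto_diff xr tendsto_scaleR tendsto_const
            bounded_linear.tendsto[OF matrix_vector_mul_bounded_linear])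
    have ev2: "\<forall>\<^sub>F n in sequentially. 2 \<le> r n"
      using seq_suble[OF r] by (intro eventually_sequentiallyI[of 2]) (metis le_trans)
    have xsb: "xs \<in> cbox_set l"
      by (rule Lim_in_closed_set[OF box_closed _ _ xr]) (use ev2 xb in \<open>auto elim: eventually_mono\<close>)
    have Tn: "x (Suc (r n)) = prox_g tau delta l (x (r n) - tau *\<^sub>R (M *v x (r n)))" if "2 \<le> r n" for n
      using rec[of "r n"] that unfolding T_def smult_real by simp
    have minim: "(1 - tau*delta) * (norm xs)\<^sup>2 - 2 * (xs \<bullet> zs) \<le> (1 - tau*delta) * (norm y)\<^sup>2 - 2 * (y \<bullet> zs)"
      if y: "y \<in> cbox_set l" for y
    proof (rule tendsto_le[OF sequentially_bot])
      show "(\<lambda>n. (1 - tau*delta) * (norm y)\<^sup>2 - 2 * (y \<bullet> (x (r n) - tau *\<^sub>R (M *v x (r n)))))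
             \<longlonglongrightarrow> (1 - tau*delta) * (norm y)\<^sup>2 - 2 * (y \<bullet> zs)"
        by (intro tendsto_intros zn)
      show "(\<lambda>n. (1 - tau*delta) * (norm (x (Suc (r n))))\<^sup>2 - 2 * (x (Suc (r n)) \<bullet> (x (r n) - tau *\<^sub>R (M *v x (r n)))))
             \<longlonglongrightarrow> (1 - tau*delta) * (norm xs)\<^sup>2 - 2 * (xs \<bullet> zs)"
        by (intro tendsto_intros zn qn)
      show "\<forall>\<^sub>F n in sequentially. (1 - tau*delta) * (norm (x (Suc (r n))))\<^sup>2 - 2 * (x (Suc (r n)) \<bullet> (x (r n) - tau *\<^sub>R (M *v x (r n))))
             \<le> (1 - tau*delta) * (norm y)\<^sup>2 - 2 * (y \<bullet> (x (r n) - tau *\<^sub>R (M *v x (r n))))"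
        using ev2
      proof (rule eventually_mono)
        fix n assume "2 \<le> r n"
        show "(1 - tau*delta) * (norm (x (Suc (r n))))\<^sup>2 - 2 * (x (Suc (r n)) \<bullet> (x (r n) - tau *\<^sub>R (M *v x (r n))))
             \<le> (1 - tau*delta) * (norm y)\<^sup>2 - 2 * (y \<bullet> (x (r n) - tau *\<^sub>R (M *v x (r n))))"
          unfolding Tn[OF \<open>2 \<le> r n\<close>] by (rule prox_min(1)[OF k0 td0 y])
      qed
    qed
    show ?thesis
      unfolding stationary_def
    proof (intro conjI ballI xsb)
      fix y :: "complex^'b" assume y: "y \<in> cbox_set l"
      define d where "d = y - xs"
      define a where "a = 2*(1-tau*delta)*(xs \<bullet> d) - 2*(d \<bullet> zs)"
      define b where "b = (1-tau*delta)*(norm d)\<^sup>2"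
      have "0 \<le> a + s' * b" if s': "0 < s'" "s' \<le> 1" for s'
      proof -
        have vb: "xs + s' *\<^sub>R (y - xs) \<in> cbox_set l" by (rule box_convex[OF xsb y]) (use s' in auto)
        have m: "(1 - tau*delta) * (norm xs)\<^sup>2 - 2 * (xs \<bullet> zs) \<le>
            (1 - tau*delta) * (norm (xs + s' *\<^sub>R d))\<^sup>2 - 2 * ((xs + s' *\<^sub>R d) \<bullet> zs)"
          using minim[OF vb] unfolding d_def .
        have n2: "(norm (xs + s' *\<^sub>R d))\<^sup>2 = (norm xs)\<^sup>2 + 2 * s' * (xs \<bullet> d) + s'\<^sup>2 * (norm d)\<^sup>2"
          unfolding norm_add_sq by (simp add: power_mult_distrib)
        have i2: "(xs + s' *\<^sub>R d) \<bullet> zs = xs \<bullet> zs + s' * (d \<bullet> zs)" by (simp add: inner_add_left)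
        have "0 \<le> s' * (a + s' * b)"
          using m unfolding n2 i2 a_def b_def by (simp add: algebra_simps power2_eq_square)
        then show ?thesis using s' by (simp add: zero_le_mult_iff)
      qed
      moreover have "0 \<le> b" unfolding b_def using k0 by simp
      ultimately have a0: "0 \<le> a" using small_param by blast
      have "a = 2 * tau * (d \<bullet> (M *v xs) - delta * (d \<bullet> xs))"
        unfolding a_def zs_def by (simp add: inner_diff_right inner_commute algebra_simps)
      then have "0 \<le> d \<bullet> (M *v xs) - delta * (d \<bullet> xs)"
        using a0 assms(5) by (simp add: zero_le_mult_iff)
      then show "cinner (- ((cadj A ** A) *v xs - delta *\<^sub>R xs)) (y - xs) \<le> 0"
        unfolding cinner_eq d_def[symmetric] M_def[symmetric]
        by (simp add: inner_diff_left inner_diff_right inner_commute)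
    qed
  qed
  show ?thesis
    using part1 part2 unfolding A_def[symmetric] l_def[symmetric] by blast
qed

end
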